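(* Let $\gamma_i\in\mathcal{M}_k\otimes\mathcal{M}_k$, $i=1,\dots,n$, be states whose images are not contained in the anti-symmetric subspace of $\mathbb{C}^k\otimes\mathbb{C}^k$. Then: (a) $\gamma_1^\Gamma\otimes\cdots\otimes\gamma_n^\Gamma\ge0$ if and only if $\gamma_i^\Gamma\ge0$ for all $i$; (b) $\mathcal{R}(\gamma_1^\Gamma)\otimes\cdots\otimes\mathcal{R}(\gamma_n^\Gamma)\ge0$ if and only if $\mathcal{R}(\gamma_i^\Gamma)\ge0$ for all $i$; (c) $\mathcal{R}(\gamma_1)\otimes\cdots\otimes\mathcal{R}(\gamma_n)=\gamma_1\otimes\cdots\otimes\gamma_n$ if and only if $\mathcal{R}(\gamma_i)=\gamma_i$ for all $i$.
   Context: $\mathcal{M}_k$ denotes complex $k\times k$ matrices; $\mathcal{M}_k\otimes\mathcal{M}_k\cong\mathcal{M}_{k^2}$ via the Kronecker product. A state is a positive semidefinite Hermitian matrix (not necessarily of trace one). The anti-symmetric subspace of $\mathbb{C}^k\otimes\mathbb{C}^k$ is $\{x: F_kx=-x\}$, where $F_k(v\otimes w)=w\otimes v$ is the flip operator. Partial transpose: $(\sum_iA_i\otimes B_i)^\Gamma=\sum_iA_i\otimes B_i^t$. Realignment on $\mathcal{M}_k\otimes\mathcal{M}_k$: identify $\mathcal{M}_k$ with $\mathbb{C}^k\otimes\mathbb{C}^k$ via $\mathrm{vec}(vw^t)=v\otimes w$ (extended linearly), and set $\mathcal{R}(A\otimes B)=\mathrm{vec}(A)\mathrm{vec}(B)^t$,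 extended linearly. *)

theory Defs
  imports "Jordan_Normal_Form.Matrix"
begin

text \<open>The space C^k (x) C^k is identified with C^(k*k) via the basis index
  (a,b) corresponding to a*k+b (the usual Kronecker convention), and
  M_k (x) M_k with (k*k) x (k*k) matrices accordingly.\<close>

definition kron :: "complex mat \<Rightarrow> complex mat \<Rightarrow> complex mat" where
  "kron A B = mat (dim_row A * dim_row B) (dim_col A * dim_col B)
     (\<lambda>(i,j). A $$ (i div dim_row B, j div dim_col B) * B $$ (i mod dim_row B, j mod dim_col B))"

definition kron_list :: "complex mat list \<Rightarrow> complex mat" where
  "kron_list As = foldr kron As (1\<^sub>m 1)"

definition hermitian_mat :: "complex mat \<Rightarrow> bool" where
  "hermitian_mat A \<longleftrightarrow> A \<in> carrier_mat (dim_row A) (dim_row A) \<and>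
     (\<forall>i<dim_row A. \<forall>j<dim_row A. A $$ (i,j) = cnj (A $$ (j,i)))"

definition psd :: "complex mat \<Rightarrow> bool" where
  "psd A \<longleftrightarrow> hermitian_mat A \<and>
     (\<forall>v\<in>carrier_vec (dim_row A). 0 \<le> Re ((A *\<^sub>v v) \<bullet>c v))"

definition is_state :: "nat \<Rightarrow> complex mat \<Rightarrow> bool" where
  "is_state k A \<longleftrightarrow> A \<in> carrier_mat (k*k) (k*k) \<and> psd A"

definition flip_vec :: "nat \<Rightarrow> complex vec \<Rightarrow> complex vec" where
  "flip_vec k x = vec (k*k) (\<lambda>i. x $ ((i mod k) * k + i div k))"

definition antisym_subspace :: "nat \<Rightarrow> complex vec set" where
  "antisym_subspace k = {x \<in> carrier_vec (k*k). flip_vec k x = - x}"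

definition mat_image :: "complex mat \<Rightarrow> complex vec set" where
  "mat_image A = {A *\<^sub>v x | x. x \<in> carrier_vec (dim_col A)}"

text \<open>Partial transpose on M_k (x) M_k: (sum A_i (x) B_i)^Gamma = sum A_i (x) B_i^t.
  Entry ((a,b),(c,d)) of the result is entry ((a,d),(c,b)) of the argument.\<close>
definition ptrans :: "nat \<Rightarrow> complex mat \<Rightarrow> complex mat" where
  "ptrans k A = mat (k*k) (k*k)
     (\<lambda>(i,j). A $$ ((i div k) * k + j mod k, (j div k) * k + i mod k))"

text \<open>Realignment on M_k (x) M_k, with vec(v w^t) = v (x) w, i.e. vec(A)_(i*k+j) = A_(i,j),
  and R(A (x) B) = vec(A) vec(B)^t.  Entry ((i,j),(l,m)) of R(X) is entry ((i,l),(j,m)) of X.\<close>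
definition realign :: "nat \<Rightarrow> complex mat \<Rightarrow> complex mat" where
  "realign k A = mat (k*k) (k*k)
     (\<lambda>(p,q). A $$ ((p div k) * k + q div k, (p mod k) * k + q mod k))"

end

theory Submission
  imports Defs
begin
definition form :: "nat \<Rightarrow> (nat \<Rightarrow> nat \<Rightarrow> complex) \<Rightarrow> (nat \<Rightarrow> complex) \<Rightarrow> complex" where
  "form n B v = (\<Sum>i<n. \<Sum>j<n. cnj (v i) * B i j * v j)"

definition psdf :: "nat \<Rightarrow> (nat \<Rightarrow> nat \<Rightarrow> complex) \<Rightarrow> bool" where
  "psdf n B \<longleftrightarrow> (\<forall>i<n. \<forall>j<n. B i j = cnj (B j i)) \<and> (\<forall>v. 0 \<le> Re (form n B v))"

lemma form_cong: "(\<And>i j. i<n \<Longrightarrow> j<n \<Longrightarrow> B i j = C i j) \<Longrightarrow> (\<And>i. i<n \<Longrightarrow> v i = w i) \<Longrightarrow> form n B v = form n C w"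
  unfolding form_def by (intro sum.cong) auto

lemma psdf_cong: "(\<And>i j. i<n \<Longrightarrow> j<n \<Longrightarrow> B i j = C i j) \<Longrightarrow> psdf n B = psdf n C"
  proof -
  assume h: "\<And>i j. i<n \<Longrightarrow> j<n \<Longrightarrow> B i j = C i j"
  have "form n B v = form n C v" for v using form_cong[of n B C v v] h by blast
  then show ?thesis unfolding psdf_def using h by auto
qed

lemma form_two:
  assumes "i<n" "j<n" "i\<noteq>j"
  shows "form n B (\<lambda>p. (if p = i then a else 0) + (if p = j then b else 0))
     = cnj a * B i i * a + cnj a * B i j * b + cnj b * B j i * a + cnj b * B j j * b"
  using assms unfolding form_def
  by (simp add: ring_distribs sum.distrib if_distrib[of "\<lambda>x. x * _"] if_distrib[of "\<lambda>x. _ * x"] if_distrib[of cnj] cong: if_cong)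

lemma form_one:
  assumes "i<n"
  shows "form n B (\<lambda>p. if p = i then 1 else 0) = B i i"
  using assms unfolding form_def
  by (simp add: if_distrib[of "\<lambda>x. x * _"] if_distrib[of "\<lambda>x. _ * x"] if_distrib[of cnj] cong: if_cong)

lemma polar:
  assumes "\<And>v. Im (form n B v) = 0" "i<n" "j<n"
  shows "B i j = cnj (B j i)"
proof (cases "i = j")
  case True
  have "Im (B i i) = 0" using assms(1)[of "\<lambda>p. if p = i then 1 else 0"] form_one[OF assms(2)] by simp
  then show ?thesis using True by (simp add: complex_eq_iff)
next
  case False
  have ii: "Im (B i i) = 0" using assms(1)[of "\<lambda>p. if p = i then 1 else 0"] form_one[OF assms(2)] by simp
  have jj: "Im (B j j) = 0" using assms(1)[of "\<lambda>p. if p = j then 1 else 0"] form_one[OF assms(3)] by simp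
  have 1: "Im (B i i + B i j + B j i + B j j) = 0"
    using assms(1)[of "\<lambda>p. (if p = i then 1 else 0) + (if p = j then 1 else 0)"] form_two[OF assms(2,3) False, of B 1 1]
    by simp
  have 2: "Im (B i i + B i j * \<i> - \<i> * B j i + B j j) = 0"
    using assms(1)[of "\<lambda>p. (if p = i then 1 else 0) + (if p = j then \<i> else 0)"] form_two[OF assms(2,3) False, of B 1 \<i>]
    by simp
  show ?thesis using ii jj 1 2 by (simp add: complex_eq_iff)
qed

lemma form_real:
  assumes "\<And>i j. i<n \<Longrightarrow> j<n \<Longrightarrow> B i j = cnj (B j i)"
  shows "cnj (form n B v) = form n B v"
proof -
  have "cnj (form n B v) = (\<Sum>i<n. \<Sum>j<n. v i * cnj (B i j) * cnj (v j))"
    unfolding form_def by simp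
  also have "\<dots> = (\<Sum>i<n. \<Sum>j<n. v i * B j i * cnj (v j))"
    using assms by (intro sum.cong refl) (metis complex_cnj_cnj lessThan_iff)
  also have "\<dots> = (\<Sum>j<n. \<Sum>i<n. v i * B j i * cnj (v j))" by (rule sum.swap)
  also have "\<dots> = form n B v" unfolding form_def by (intro sum.cong refl) (simp add: mult_ac)
  finally show ?thesis .
qed

lemma form_Im:
  assumes "\<And>i j. i<n \<Longrightarrow> j<n \<Longrightarrow> B i j = cnj (B j i)"
  shows "Im (form n B v) = 0"
  using form_real[OF assms, where v=v] by (simp add: complex_eq_iff)

lemma psdf_herm: "psdf n B \<Longrightarrow> i<n \<Longrightarrow> j<n \<Longrightarrow> B i j = cnj (B j i)"
  unfolding psdf_def by blast

lemma psdf_form: "psdf n B \<Longrightarrow> Im (form n B v) = 0 \<and> 0 \<le> Re (form n B v)"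
  unfolding psdf_def using form_Im[of n B v] by blast

lemma psdf_diag: assumes "psdf n B" "i<n" shows "Im (B i i) = 0" "0 \<le> Re (B i i)"
  using psdf_form[OF assms(1), of "\<lambda>p. if p = i then 1 else 0"] form_one[OF assms(2)] by auto

lemma psdf_zero:
  assumes p: "psdf n B" and ab: "a<n" "b<n" and z0: "B a a = 0"
  shows "B a b = 0"
proof (rule ccontr)
  assume nz: "B a b \<noteq> 0"
  then have ne: "a \<noteq> b" using z0 by auto
  define z where "z = B a b"
  define q where "q = (Re z)^2 + (Im z)^2"
  have q: "q > 0" using nz unfolding q_def z_def
    by (metis complex_eq_iff sum_power2_gt_zero_iff zero_complex.simps)
  define r where "r = (Re (B b b) + 1) / (2*q)"
  define al where "al = - of_real r * z"
  have ba: "B b a = cnj z" using psdf_herm[OF p ab(2,1)] unfolding z_def by simp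
  have f: "form n B (\<lambda>p. (if p = a then al else 0) + (if p = b then 1 else 0))
     = cnj al * z + cnj z * al + B b b"
    using form_two[OF ab ne, of B al 1] z0 ba unfolding z_def by simp
  have "Re (cnj al * z + cnj z * al + B b b) = - 2 * r * q + Re (B b b)"
    unfolding al_def q_def by (simp add: algebra_simps power2_eq_square)
  also have "\<dots> = -1" unfolding r_def using q by (simp add: field_simps)
  finally have "Re (form n B (\<lambda>p. (if p = a then al else 0) + (if p = b then 1 else 0))) = -1"
    using f by simp
  then show False using psdf_form[OF p] by (metis neg_0_le_iff_le not_one_le_zero)
qed

lemma form_Suc:
  "form (Suc m) B w = form m B w + (\<Sum>i<m. cnj (w i) * B i m) * w m
     + cnj (w m) * (\<Sum>j<m. B m j * w j) + cnj (w m) * B m m * w m"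
  unfolding form_def by (simp add: sum.distrib sum_distrib_left sum_distrib_right algebra_simps)

lemma chol:
  "psdf m B \<Longrightarrow> \<exists>bs. \<forall>i<m. \<forall>j<m. B i j = (\<Sum>r<m. bs r i * cnj (bs r j))"
proof (induction m arbitrary: B)
  case 0 then show ?case by simp
next
  case (Suc m)
  note p = Suc.prems
  have herm: "\<And>i j. i < Suc m \<Longrightarrow> j < Suc m \<Longrightarrow> B i j = cnj (B j i)" using psdf_herm[OF p] by blast
  have amI: "Im (B m m) = 0" and amR: "0 \<le> Re (B m m)" using psdf_diag[OF p, of m] by auto
  show ?case
  proof (cases "Re (B m m) = 0")
    case True
    then have a0: "B m m = 0" using amI by (simp add: complex_eq_iff)
    have row0: "B m j = 0" if "j < Suc m" for j using psdf_zero[OF p _ that a0] by simp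
    have col0: "B j m = 0" if "j < Suc m" for j using herm[OF that, of m] row0[OF that] by simp
    have "psdf m B"
      unfolding psdf_def
    proof (intro conjI allI impI)
      fix i j assume "i < m" "j < m" then show "B i j = cnj (B j i)" using herm less_SucI by blast
    next
      fix v
      have "form (Suc m) B (v(m := 0)) = form m B (v(m:=0))" by (simp add: form_Suc)
      also have "\<dots> = form m B v" by (rule form_cong) auto
      finally show "0 \<le> Re (form m B v)" using psdf_form[OF p, of "v(m:=0)"] by simp
    qed
    from Suc.IH[OF this] obtain bs where bs: "\<forall>i<m. \<forall>j<m. B i j = (\<Sum>r<m. bs r i * cnj (bs r j))" by blast
    define cs where "cs r i = (if r < m \<and> i < m then bs r i else 0)" for r i
    show ?thesis
    proof (intro exI allI impI)
      fix i j assume ij: "i < Suc m" "j < Suc m"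
      show "B i j = (\<Sum>r<Suc m. cs r i * cnj (cs r j))"
      proof (cases "i < m \<and> j < m")
        case True
        then show ?thesis using bs unfolding cs_def by simp
      next
        case False
        then have "i = m \<or> j = m" using ij by auto
        then show ?thesis using row0 col0 ij unfolding cs_def by auto
      qed
    qed
  next
    case False
    then have aR: "0 < Re (B m m)" using amR by simp
    define a where "a = B m m"
    have aof: "a = of_real (Re a)" unfolding a_def using amI by (simp add: complex_eq_iff)
    define s where "s = sqrt (Re a)"
    have s: "s > 0" unfolding s_def a_def using aR by simp
    have ss0: "s * s = Re a" unfolding s_def a_def using aR by simp
    have ss: "of_real s * of_real s = a"
      by (subst aof) (simp only: of_real_mult[symmetric] ss0)
    define b where "b i = B i m / of_real s" for i
    define B' where "B' i j = B i j - b i * cnj (b j)" for i j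
    have "psdf m B'"
      unfolding psdf_def
    proof (intro conjI allI impI)
      fix i j assume "i < m" "j < m"
      then have "B i j = cnj (B j i)" using herm less_SucI by blast
      then show "B' i j = cnj (B' j i)" unfolding B'_def by simp
    next
      fix v
      define S where "S = (\<Sum>j<m. B m j * v j)"
      define t where "t = - S / a"
      have hm: "B i m = cnj (B m i)" if "i < m" for i using herm[of i m] that by simp
      have cS: "(\<Sum>i<m. cnj (v i) * B i m) = cnj S"
        unfolding S_def cnj_sum by (intro sum.cong refl) (simp add: hm mult.commute)
      have "form m B' v = form m B v - (\<Sum>i<m. \<Sum>j<m. (cnj (v i) * b i) * (cnj (b j) * v j))"
        unfolding form_def B'_def sum_subtractf[symmetric]
        by (intro sum.cong refl) (simp add: algebra_simps)
      also have "(\<Sum>i<m. \<Sum>j<m. (cnj (v i) * b i) * (cnj (b j) * v j)) = (\<Sum>i<m. cnj (v i) * b i) * (\<Sum>j<m. cnj (b j) * v j)"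
        by (simp add: sum_product)
      also have "(\<Sum>i<m. cnj (v i) * b i) = cnj S / of_real s"
        unfolding b_def cS[symmetric] by (simp add: sum_divide_distrib)
      also have "(\<Sum>j<m. cnj (b j) * v j) = S / of_real s"
        unfolding b_def S_def sum_divide_distrib by (intro sum.cong refl) (simp add: hm mult.commute)
      finally have "form m B' v = form m B v - cnj S * S / (of_real s * of_real s)" by simp
      then have f1: "form m B' v = form m B v - cnj S * S / a" using ss by simp
      have e1: "form m B (v(m:=t)) = form m B v" by (rule form_cong) auto
      have e2: "(\<Sum>i<m. cnj ((v(m:=t)) i) * B i m) = cnj S" unfolding cS[symmetric] by (rule sum.cong) auto
      have e3: "(\<Sum>j<m. B m j * (v(m:=t)) j) = S" unfolding S_def by (rule sum.cong) auto
      have ca: "cnj a = a" using amI unfolding a_def by (simp add: complex_eq_iff)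
      have ct: "cnj t = - cnj S / a" unfolding t_def by (simp add: ca)
      have "form (Suc m) B (v(m := t)) = form m B v + cnj S * t + cnj t * S + cnj t * a * t"
        unfolding form_Suc e1 e2 e3 by (simp add: a_def)
      also have "\<dots> = form m B v - cnj S * S / a"
        unfolding ct unfolding t_def using aR a_def by (auto simp: field_simps)
      finally show "0 \<le> Re (form m B' v)" using f1 psdf_form[OF p, of "v(m:=t)"] by simp
    qed
    from Suc.IH[OF this] obtain bs where bs: "\<forall>i<m. \<forall>j<m. B' i j = (\<Sum>r<m. bs r i * cnj (bs r j))" by blast
    define cs where "cs r i = (if r < m then (if i < m then bs r i else 0) else (if i < m then b i else of_real s))" for r i
    show ?thesis
    proof (intro exI allI impI)
      fix i j assume ij: "i < Suc m" "j < Suc m"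
      have e: "(\<Sum>r<Suc m. cs r i * cnj (cs r j)) = (\<Sum>r<m. cs r i * cnj (cs r j)) + cs m i * cnj (cs m j)"
        by simp
      show "B i j = (\<Sum>r<Suc m. cs r i * cnj (cs r j))"
      proof (cases "i < m")
        case i: True
        show ?thesis
        proof (cases "j < m")
          case True
          then have "B i j - b i * cnj (b j) = (\<Sum>r<m. bs r i * cnj (bs r j))" using bs i unfolding B'_def by simp
          then show ?thesis using True i unfolding e cs_def by (simp add: algebra_simps)
        next
          case False then have "j = m" using ij by simp
          then show ?thesis using i s unfolding e cs_def b_def by simp
        qed
      next
        case False then have im: "i = m" using ij by simp
        show ?thesis
        proof (cases "j < m")
          case True
          then show ?thesis using im s herm[of m j] unfolding e cs_def b_def by simp
        next
          case False then have "j = m" using ij by simp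
          then show ?thesis using im ss unfolding e cs_def a_def by simp
        qed
      qed
    qed
  qed
qed

definition kf :: "nat \<Rightarrow> (nat \<Rightarrow> nat \<Rightarrow> complex) \<Rightarrow> (nat \<Rightarrow> nat \<Rightarrow> complex) \<Rightarrow> nat \<Rightarrow> nat \<Rightarrow> complex" where
  "kf m A B = (\<lambda>p q. A (p div m) (q div m) * B (p mod m) (q mod m))"

definition posf :: "nat \<Rightarrow> (nat \<Rightarrow> nat \<Rightarrow> complex) \<Rightarrow> bool" where
  "posf n A \<longleftrightarrow> (\<exists>u. Im (form n A u) = 0 \<and> 0 < Re (form n A u))"

lemma sum_split_add: "(\<Sum>p<a+b. h p) = (\<Sum>p<a. h p) + (\<Sum>j<b. h (a+j::nat))"
proof -
  have "(\<Sum>p<a+b. h p) = (\<Sum>p\<in>{0..<a}. h p) + (\<Sum>p\<in>{a..<a+b}. h p)"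
    by (simp add: atLeast0LessThan[symmetric] sum.atLeastLessThan_concat)
  also have "(\<Sum>p\<in>{a..<a+b}. h p) = (\<Sum>j<b. h (a+j))"
    using sum.shift_bounds_nat_ivl[of h 0 a b] by (simp add: atLeast0LessThan add.commute)
  finally show ?thesis by (simp add: atLeast0LessThan)
qed

lemma sum_split_mult: "(\<Sum>p<n*m. h p) = (\<Sum>i<n. \<Sum>j<m. h (i*m+j :: nat)) "
proof (induction n)
  case 0 then show ?case by simp
next
  case (Suc n)
  have "(\<Sum>p<Suc n*m. h p) = (\<Sum>p<n*m + m. h p)" by (simp add: add.commute)
  also have "\<dots> = (\<Sum>p<n*m. h p) + (\<Sum>j<m. h (n*m+j))"
    by (rule sum_split_add)
  finally show ?case using Suc by simp
qed

lemma swap5: "(\<Sum>r\<in>R. \<Sum>i\<in>I. \<Sum>j\<in>J. \<Sum>k\<in>K. \<Sum>l\<in>L. g r i j k l)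
   = (\<Sum>i\<in>I. \<Sum>j\<in>J. \<Sum>k\<in>K. \<Sum>l\<in>L. \<Sum>r\<in>R. g r i j k l)"
proof -
  have "(\<Sum>r\<in>R. \<Sum>i\<in>I. \<Sum>j\<in>J. \<Sum>k\<in>K. \<Sum>l\<in>L. g r i j k l)
      = (\<Sum>i\<in>I. \<Sum>r\<in>R. \<Sum>j\<in>J. \<Sum>k\<in>K. \<Sum>l\<in>L. g r i j k l)" by (rule sum.swap)
  also have "\<dots> = (\<Sum>i\<in>I. \<Sum>j\<in>J. \<Sum>r\<in>R. \<Sum>k\<in>K. \<Sum>l\<in>L. g r i j k l)"
    by (rule sum.cong[OF refl], rule sum.swap)
  also have "\<dots> = (\<Sum>i\<in>I. \<Sum>j\<in>J. \<Sum>k\<in>K. \<Sum>r\<in>R. \<Sum>l\<in>L. g r i j k l)"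
    by (rule sum.cong[OF refl], rule sum.cong[OF refl], rule sum.swap)
  also have "\<dots> = (\<Sum>i\<in>I. \<Sum>j\<in>J. \<Sum>k\<in>K. \<Sum>l\<in>L. \<Sum>r\<in>R. g r i j k l)"
    by (rule sum.cong[OF refl], rule sum.cong[OF refl], rule sum.cong[OF refl], rule sum.swap)
  finally show ?thesis .
qed

lemma swap_mid: "(\<Sum>i\<in>I. \<Sum>k\<in>K. \<Sum>j\<in>J. \<Sum>l\<in>L. g i j k l)
   = (\<Sum>i\<in>I. \<Sum>j\<in>J. \<Sum>k\<in>K. \<Sum>l\<in>L. g i j k l)"
  by (rule sum.cong[OF refl], rule sum.swap)

lemma form_kron_expand:
  "form (n*m) (kf m A B) x = (\<Sum>i<n. \<Sum>j<m. \<Sum>i'<n. \<Sum>j'<m.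
      cnj (x (i*m+j)) * A i i' * B j j' * x (i'*m+j'))"
  unfolding form_def kf_def sum_split_mult
  by (intro sum.cong refl) simp

lemma form_kron_prod:
  "form (n*m) (kf m A B) (\<lambda>p. u (p div m) * w (p mod m)) = form n A u * form m B w"
proof -
  have "form (n*m) (kf m A B) (\<lambda>p. u (p div m) * w (p mod m)) =
     (\<Sum>i<n. \<Sum>j<m. \<Sum>i'<n. \<Sum>j'<m. (cnj (u i) * A i i' * u i') * (cnj (w j) * B j j' * w j'))"
    unfolding form_kron_expand by (intro sum.cong refl) (simp add: mult_ac)
  also have "\<dots> = form n A u * form m B w"
    unfolding form_def sum_product by (rule refl)
  finally show ?thesis .
qed

lemma prod3: "(sum a J) * (c::complex) * (sum b L) = (\<Sum>j\<in>J. \<Sum>l\<in>L. a j * c * b l)"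
  by (simp only: sum_distrib_left sum_distrib_right) (rule sum.swap)

lemma lin_sum: "(B::complex) = (\<Sum>r\<in>R. f r * g r) \<Longrightarrow> c * A * B * d = (\<Sum>r\<in>R. (f r * c) * A * (g r * d))"
  by (simp add: sum_distrib_left sum_distrib_right mult_ac)

lemma psdf_kron:
  assumes pA: "psdf n A" and pB: "psdf m B"
  shows "psdf (n*m) (kf m A B)"
  unfolding psdf_def
proof (intro conjI allI impI)
  fix p q assume pq: "p < n*m" "q < n*m"
  then have m: "m > 0" by (cases m) auto
  have "p div m < n" "q div m < n" using pq by (auto simp: less_mult_imp_div_less)
  moreover have "p mod m < m" "q mod m < m" using m by auto
  ultimately have "A (p div m) (q div m) = cnj (A (q div m) (p div m))"
    "B (p mod m) (q mod m) = cnj (B (q mod m) (p mod m))"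
    using psdf_herm[OF pA] psdf_herm[OF pB] by blast+
  then show "kf m A B p q = cnj (kf m A B q p)"
    unfolding kf_def by simp
next
  fix x
  obtain bs where bs: "\<forall>i<m. \<forall>j<m. B i j = (\<Sum>r<m. bs r i * cnj (bs r j))" using chol[OF pB] by blast
  define y where "y r i = (\<Sum>j<m. cnj (bs r j) * x (i*m+j))" for r i
  have "form (n*m) (kf m A B) x = (\<Sum>i<n. \<Sum>j<m. \<Sum>i'<n. \<Sum>j'<m. \<Sum>r<m.
      (bs r j * cnj (x (i*m+j))) * A i i' * (cnj (bs r j') * x (i'*m+j')))"
    unfolding form_kron_expand
    by (intro sum.cong refl, rule lin_sum) (simp add: bs)
  also have "\<dots> = (\<Sum>r<m. \<Sum>i<n. \<Sum>j<m. \<Sum>i'<n. \<Sum>j'<m.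
      (bs r j * cnj (x (i*m+j))) * A i i' * (cnj (bs r j') * x (i'*m+j')))"
    by (rule swap5[where g = "\<lambda>r i j i' j'. (bs r j * cnj (x (i*m+j))) * A i i' * (cnj (bs r j') * x (i'*m+j'))"
      and R = "{..<m}" and I = "{..<n}" and J = "{..<m}" and K = "{..<n}" and L = "{..<m}", symmetric])
  also have "\<dots> = (\<Sum>r<m. form n A (y r))"
  proof (rule sum.cong[OF refl])
    fix r
    have e1: "form n A (y r) = (\<Sum>i<n. \<Sum>i'<n. \<Sum>j<m. \<Sum>j'<m.
      (bs r j * cnj (x (i*m+j))) * A i i' * (cnj (bs r j') * x (i'*m+j')))"
    proof -
      have cy: "cnj (y r i) = (\<Sum>j<m. bs r j * cnj (x (i*m+j)))" for i by (simp add: y_def)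
      show ?thesis unfolding form_def cy unfolding y_def prod3 ..
    qed
    have e2: "(\<Sum>i<n. \<Sum>i'<n. \<Sum>j<m. \<Sum>j'<m.
      (bs r j * cnj (x (i*m+j))) * A i i' * (cnj (bs r j') * x (i'*m+j'))) =
      (\<Sum>i<n. \<Sum>j<m. \<Sum>i'<n. \<Sum>j'<m.
      (bs r j * cnj (x (i*m+j))) * A i i' * (cnj (bs r j') * x (i'*m+j')))"
      by (rule swap_mid[where g = "\<lambda>i j i' j'. (bs r j * cnj (x (i*m+j))) * A i i' * (cnj (bs r j') * x (i'*m+j'))"
      and I = "{..<n}" and J = "{..<m}" and K = "{..<n}" and L = "{..<m}"])
    show "(\<Sum>i<n. \<Sum>j<m. \<Sum>i'<n. \<Sum>j'<m.
      (bs r j * cnj (x (i*m+j))) * A i i' * (cnj (bs r j') * x (i'*m+j'))) = form n A (y r)"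
      using e1 e2 by simp
  qed
  finally have "Re (form (n*m) (kf m A B) x) = (\<Sum>r<m. Re (form n A (y r)))" by simp
  also have "\<dots> \<ge> 0" using psdf_form[OF pA] by (intro sum_nonneg) auto
  finally show "0 \<le> Re (form (n*m) (kf m A B) x)" .
qed

lemma mult_real_pos:
  assumes "Im a = 0" "0 < Re a" "Im (a*z) = 0" "0 \<le> Re (a*z)"
  shows "Im z = 0 \<and> 0 \<le> Re z"
proof -
  have "Re a * Im z = 0" using assms by simp
  then have "Im z = 0" using assms by simp
  moreover have "Re a * Re z \<ge> 0" using assms \<open>Im z = 0\<close> by simp
  then have "Re z \<ge> 0" using assms(2) by (metis not_le mult_pos_neg order.strict_iff_not)
  ultimately show ?thesis by simp
qed

lemma psdf_of_forms: "(\<And>v. Im (form n B v) = 0 \<and> 0 \<le> Re (form n B v)) \<Longrightarrow> psdf n B"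
proof -
  assume h: "\<And>v. Im (form n B v) = 0 \<and> 0 \<le> Re (form n B v)"
  have "B i j = cnj (B j i)" if "i < n" "j < n" for i j
    using polar[of n B i j] h that by blast
  then show ?thesis unfolding psdf_def using h by blast
qed

lemma kron_iff:
  assumes a: "posf n A" and b: "posf m B"
  shows "psdf (n*m) (kf m A B) \<longleftrightarrow> psdf n A \<and> psdf m B"
proof
  assume k: "psdf (n*m) (kf m A B)"
  obtain u where u: "Im (form n A u) = 0" "0 < Re (form n A u)" using a unfolding posf_def by blast
  obtain w where w: "Im (form m B w) = 0" "0 < Re (form m B w)" using b unfolding posf_def by blast
  have "psdf m B"
  proof (rule psdf_of_forms)
    fix v
    have "Im (form n A u * form m B v) = 0 \<and> 0 \<le> Re (form n A u * form m B v)"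
      using psdf_form[OF k, of "\<lambda>p. u (p div m) * v (p mod m)"] unfolding form_kron_prod by blast
    then show "Im (form m B v) = 0 \<and> 0 \<le> Re (form m B v)" using mult_real_pos u by blast
  qed
  moreover have "psdf n A"
  proof (rule psdf_of_forms)
    fix v
    have "Im (form m B w * form n A v) = 0 \<and> 0 \<le> Re (form m B w * form n A v)"
      using psdf_form[OF k, of "\<lambda>p. v (p div m) * w (p mod m)"] unfolding form_kron_prod by (simp only: mult.commute)
    then show "Im (form n A v) = 0 \<and> 0 \<le> Re (form n A v)" using mult_real_pos w by blast
  qed
  ultimately show "psdf n A \<and> psdf m B" by blast
next
  assume "psdf n A \<and> psdf m B"
  then show "psdf (n*m) (kf m A B)" using psdf_kron by blast
qed

lemma posf_kron:
  assumes a: "posf n A" and b: "posf m B"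
  shows "posf (n*m) (kf m A B)"
proof -
  obtain u where u: "Im (form n A u) = 0" "0 < Re (form n A u)" using a unfolding posf_def by blast
  obtain w where w: "Im (form m B w) = 0" "0 < Re (form m B w)" using b unfolding posf_def by blast
  have e: "form (n*m) (kf m A B) (\<lambda>p. u (p div m) * w (p mod m)) = form n A u * form m B w"
    by (rule form_kron_prod)
  have i: "Im (form n A u * form m B w) = 0" using u w by simp
  have r: "Re (form n A u * form m B w) = Re (form n A u) * Re (form m B w)" using u w by simp
  have pos: "0 < Re (form n A u * form m B w)" unfolding r using u(2) w(2) by (rule mult_pos_pos)
  show ?thesis unfolding posf_def
  proof (rule exI[of _ "\<lambda>p. u (p div m) * w (p mod m)"])
    show "Im (form (n*m) (kf m A B) (\<lambda>p. u (p div m) * w (p mod m))) = 0 \<and>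
      0 < Re (form (n*m) (kf m A B) (\<lambda>p. u (p div m) * w (p mod m)))"
      unfolding e using i pos by blast
  qed
qed

lemma delta_sum2: "i<(k::nat) \<Longrightarrow> (\<Sum>j<k. \<Sum>l<k. (if i = j then f j l else 0)) = (\<Sum>l<k. (f i l :: complex))"
proof -
  assume i: "i<k"
  have "(\<Sum>j<k. \<Sum>l<k. (if i = j then f j l else 0)) = (\<Sum>j<k. if i = j then (\<Sum>l<k. f j l) else 0)"
    by (intro sum.cong refl) auto
  also have "\<dots> = (\<Sum>l<k. f i l)" using i by simp
  finally show ?thesis .
qed

lemma delta_sum1: "l<(k::nat) \<Longrightarrow> (\<Sum>m<k. (c::complex) * X m * (if l = m then 1 else 0)) = c * X l"
proof -
  assume l: "l<k"
  have "(\<Sum>m<k. c * X m * (if l = m then 1 else 0)) = (\<Sum>m<k. if l = m then c * X m else 0)"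
    by (intro sum.cong refl) auto
  also have "\<dots> = c * X l" using l by simp
  finally show ?thesis .
qed

lemma form_phi:
  "form (k*k) X (\<lambda>p. if p div k = p mod k then 1 else 0) = (\<Sum>i<k. \<Sum>l<k. X (i*k+i) (l*k+l))"
proof -
  have "form (k*k) X (\<lambda>p. if p div k = p mod k then 1 else 0) =
     (\<Sum>i<k. \<Sum>j<k. \<Sum>l<k. \<Sum>m<k. (if i = j then 1 else 0) * X (i*k+j) (l*k+m) * (if l = m then 1 else 0))"
    unfolding form_def sum_split_mult by (intro sum.cong refl) simp
  also have "\<dots> = (\<Sum>i<k. \<Sum>j<k. \<Sum>l<k. (if i = j then X (i*k+j) (l*k+l) else 0))"
    by (intro sum.cong refl, subst delta_sum1) auto
  also have "\<dots> = (\<Sum>i<k. \<Sum>l<k. X (i*k+i) (l*k+l))"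
    by (rule sum.cong[OF refl], rule delta_sum2) auto
  finally show ?thesis .
qed

definition ent :: "complex mat \<Rightarrow> nat \<Rightarrow> nat \<Rightarrow> complex" where
  "ent A i j = A $$ (i,j)"

lemma qf_expand:
  assumes "A \<in> carrier_mat n n" "v \<in> carrier_vec n"
  shows "(A *\<^sub>v v) \<bullet>c v = form n (ent A) (\<lambda>i. v $ i)"
proof -
  have "(A *\<^sub>v v) \<bullet>c v = (\<Sum>i<n. (\<Sum>j<n. A $$ (i,j) * v $ j) * cnj (v $ i))"
    using assms unfolding scalar_prod_def mult_mat_vec_def row_def
    by (simp add: atLeast0LessThan)
  also have "\<dots> = form n (ent A) (\<lambda>i. v $ i)"
    unfolding form_def ent_def sum_distrib_right
    by (intro sum.cong refl) (simp add: mult_ac)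
  finally show ?thesis .
qed

lemma psd_iff:
  assumes "A \<in> carrier_mat n n"
  shows "psd A \<longleftrightarrow> psdf n (ent A)"
proof
  assume a: "psd A"
  have dr: "dim_row A = n" using assms by auto
  have "0 \<le> Re (form n (ent A) v)" for v
  proof -
    have vc: "vec n v \<in> carrier_vec n" by simp
    have "0 \<le> Re ((A *\<^sub>v vec n v) \<bullet>c vec n v)" using a vc dr
      unfolding psd_def by blast
    then have "0 \<le> Re (form n (ent A) (\<lambda>i. vec n v $ i))"
      using qf_expand[OF assms vc] by simp
    also have "form n (ent A) (\<lambda>i. vec n v $ i) = form n (ent A) v"
      by (rule form_cong) auto
    finally show ?thesis .
  qed
  moreover have "ent A i j = cnj (ent A j i)" if "i < n" "j < n" for i j
  proof -
    have "hermitian_mat A" using a unfolding psd_def by blast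
    then have "\<forall>i<dim_row A. \<forall>j<dim_row A. A $$ (i,j) = cnj (A $$ (j,i))" unfolding hermitian_mat_def by blast
    then show ?thesis using that dr unfolding ent_def by blast
  qed
  ultimately show "psdf n (ent A)" unfolding psdf_def by blast
next
  assume h: "psdf n (ent A)"
  have "0 \<le> Re ((A *\<^sub>v v) \<bullet>c v)" if "v \<in> carrier_vec n" for v
    using qf_expand[OF assms that] h unfolding psdf_def by auto
  moreover have "hermitian_mat A"
  proof -
    have "\<forall>i<n. \<forall>j<n. A $$ (i,j) = cnj (A $$ (j,i))" using h unfolding psdf_def ent_def by blast
    moreover have dr: "dim_row A = n" using assms by auto
    ultimately show ?thesis unfolding hermitian_mat_def dr using assms by blast
  qed
  moreover have "dim_row A = n" using assms by auto
  ultimately show "psd A" unfolding psd_def by simp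
qed

lemma idx_lt: "i < n \<Longrightarrow> r < m \<Longrightarrow> i*m + r < n*(m::nat)"
proof -
  assume "i < n" "r < m"
  then have "i*m + r < i*m + m" by simp
  also have "\<dots> = (i+1)*m" by simp
  also have "\<dots> \<le> n*m" using \<open>i<n\<close> by (intro mult_right_mono) auto
  finally show ?thesis .
qed

lemma divmod_lt: "p < n*(m::nat) \<Longrightarrow> p div m < n \<and> p mod m < m"
  by (cases "m = 0") (auto simp: less_mult_imp_div_less)

lemma kron_carrier: "A \<in> carrier_mat n n \<Longrightarrow> B \<in> carrier_mat m m \<Longrightarrow> kron A B \<in> carrier_mat (n*m) (n*m)"
  unfolding kron_def by auto

lemma kron_ent: "A \<in> carrier_mat n n \<Longrightarrow> B \<in> carrier_mat m m \<Longrightarrow> p < n*m \<Longrightarrow> q < n*m \<Longrightarrow>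
   ent (kron A B) p q = kf m (ent A) (ent B) p q"
  unfolding kron_def ent_def kf_def by auto

lemma kron_ent2: "A \<in> carrier_mat n n' \<Longrightarrow> B \<in> carrier_mat m m' \<Longrightarrow> i < n \<Longrightarrow> j < n' \<Longrightarrow> r < m \<Longrightarrow> s < m' \<Longrightarrow>
   kron A B $$ (i*m+r, j*m'+s) = A $$ (i,j) * B $$ (r,s)"
  unfolding kron_def using idx_lt[of i n r m] idx_lt[of j n' s m'] by auto

lemma kron_list_Cons: "kron_list (M # Ms) = kron M (kron_list Ms)"
  unfolding kron_list_def by simp

lemma kron_list_carrier: "(\<forall>M\<in>set Ms. M \<in> carrier_mat d d) \<Longrightarrow> kron_list Ms \<in> carrier_mat (d ^ length Ms) (d ^ length Ms)"
proof (induction Ms)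
  case Nil then show ?case by (simp add: kron_list_def)
next
  case (Cons M Ms)
  then show ?case unfolding kron_list_Cons using kron_carrier[of M d "kron_list Ms" "d ^ length Ms"] by simp
qed

lemma psd_one: "psd (1\<^sub>m 1)"
proof -
  have "psdf 1 (ent (1\<^sub>m 1))" unfolding psdf_def form_def ent_def by simp
  then show ?thesis using psd_iff[of "1\<^sub>m 1" 1] by simp
qed

lemma posf_one: "posf 1 (ent (1\<^sub>m 1))"
  unfolding posf_def form_def ent_def by (rule exI[of _ "\<lambda>_. 1"]) simp

lemma posf_cong: "(\<And>i j. i<n \<Longrightarrow> j<n \<Longrightarrow> B i j = C i j) \<Longrightarrow> posf n B = posf n C"
  proof -
  assume h: "\<And>i j. i<n \<Longrightarrow> j<n \<Longrightarrow> B i j = C i j"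
  have "form n B v = form n C v" for v using form_cong[of n B C v v] h by blast
  then show ?thesis unfolding posf_def using h by auto
qed

lemma list_psd:
  "(\<forall>M\<in>set Ms. M \<in> carrier_mat d d \<and> posf d (ent M)) \<Longrightarrow>
    posf (d ^ length Ms) (ent (kron_list Ms)) \<and> (psd (kron_list Ms) \<longleftrightarrow> (\<forall>M\<in>set Ms. psd M))"
proof (induction Ms)
  case Nil then show ?case using psd_one posf_one by (simp add: kron_list_def)
next
  case (Cons M Ms)
  let ?K = "kron_list Ms"
  let ?D = "d ^ length Ms"
  have M: "M \<in> carrier_mat d d" "posf d (ent M)" using Cons.prems by auto
  have K: "?K \<in> carrier_mat ?D ?D" using kron_list_carrier[of Ms d] Cons.prems by auto
  from Cons.IH Cons.prems have IH: "posf ?D (ent ?K)" "psd ?K \<longleftrightarrow> (\<forall>M\<in>set Ms. psd M)" by auto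
  have e: "\<And>p q. p < d*?D \<Longrightarrow> q < d*?D \<Longrightarrow> ent (kron M ?K) p q = kf ?D (ent M) (ent ?K) p q"
    using kron_ent[OF M(1) K] by blast
  have kc: "kron M ?K \<in> carrier_mat (d*?D) (d*?D)" using kron_carrier[OF M(1) K] .
  have pc: "posf (d*?D) (ent (kron M ?K)) = posf (d*?D) (kf ?D (ent M) (ent ?K))"
    by (rule posf_cong) (simp add: e)
  have qc: "psdf (d*?D) (ent (kron M ?K)) = psdf (d*?D) (kf ?D (ent M) (ent ?K))"
    by (rule psdf_cong) (simp add: e)
  have "posf (d*?D) (ent (kron M ?K))"
    using pc posf_kron[OF M(2) IH(1)] by blast
  moreover have "psd (kron M ?K) \<longleftrightarrow> psd M \<and> psd ?K"
    using psd_iff[OF kc] qc kron_iff[OF M(2) IH(1)] psd_iff[OF M(1)] psd_iff[OF K] by blast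
  ultimately show ?case using IH(2) unfolding kron_list_Cons by simp
qed

lemma nz_entry: "A \<in> carrier_mat n m \<Longrightarrow> A \<noteq> 0\<^sub>m n m \<Longrightarrow> \<exists>i<n. \<exists>j<m. A $$ (i,j) \<noteq> 0"
proof (rule ccontr)
  assume A: "A \<in> carrier_mat n m" "A \<noteq> 0\<^sub>m n m" "\<not> (\<exists>i<n. \<exists>j<m. A $$ (i,j) \<noteq> 0)"
  have "A = 0\<^sub>m n m" by (rule eq_matI) (use A in auto)
  then show False using A by blast
qed

lemma zero_in_antisym: "0\<^sub>v (k*k) \<in> antisym_subspace k"
proof -
  have "flip_vec k (0\<^sub>v (k*k)) = - 0\<^sub>v (k*k)"
  proof (rule eq_vecI)
    fix i assume i: "i < dim_vec (- 0\<^sub>v (k*k) :: complex vec)"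
    then have i': "i < k*k" by simp
    have "i mod k * k + i div k < k*k" using divmod_lt[OF i'] idx_lt[of "i mod k" k "i div k" k] by simp
    then show "flip_vec k (0\<^sub>v (k*k)) $ i = (- 0\<^sub>v (k*k)) $ i" using i' unfolding flip_vec_def by simp
  qed (simp add: flip_vec_def)
  then show ?thesis unfolding antisym_subspace_def by simp
qed

lemma state_nz:
  assumes "is_state k g" "\<not> mat_image g \<subseteq> antisym_subspace k"
  shows "g \<noteq> 0\<^sub>m (k*k) (k*k)"
proof
  assume g0: "g = 0\<^sub>m (k*k) (k*k)"
  have "mat_image g \<subseteq> antisym_subspace k"
  proof
    fix y assume "y \<in> mat_image g"
    then obtain x where x: "x \<in> carrier_vec (dim_col g)" "y = g *\<^sub>v x" unfolding mat_image_def by blast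
    then have "y = 0\<^sub>v (k*k)" using g0 by auto
    then show "y \<in> antisym_subspace k" using zero_in_antisym by simp
  qed
  then show False using assms by blast
qed

lemma psd_diag_pos:
  assumes g: "g \<in> carrier_mat n n" "psd g" "g \<noteq> 0\<^sub>m n n"
  shows "\<exists>a<n. Im (g $$ (a,a)) = 0 \<and> 0 < Re (g $$ (a,a))"
proof (rule ccontr)
  assume c: "\<not> ?thesis"
  have p: "psdf n (ent g)" using psd_iff[OF g(1)] g(2) by blast
  have d0: "ent g a a = 0" if "a < n" for a
    using c psdf_diag[OF p that] that unfolding ent_def by (auto simp: complex_eq_iff)
  have "ent g a b = 0" if "a < n" "b < n" for a b
    using psdf_zero[OF p that d0[OF that(1)]] .
  then show False using nz_entry[OF g(1,3)] unfolding ent_def by blast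
qed

lemma trace_pos:
  assumes p: "psdf n G" and a: "a < n" "0 < Re (G a a)"
  shows "Im (\<Sum>p<n. G p p) = 0 \<and> 0 < Re (\<Sum>p<n. G p p)"
proof
  show "Im (\<Sum>p<n. G p p) = 0" using psdf_diag[OF p] by simp
  have "Re (G a a) \<le> (\<Sum>p<n. Re (G p p))"
    by (rule member_le_sum) (use a psdf_diag[OF p] in auto)
  then show "0 < Re (\<Sum>p<n. G p p)" using a by simp
qed

lemma ptrans_carrier: "ptrans k g \<in> carrier_mat (k*k) (k*k)" unfolding ptrans_def by simp
lemma realign_carrier: "realign k g \<in> carrier_mat (k*k) (k*k)" unfolding realign_def by simp

lemma ptrans_diag: "a < k*k \<Longrightarrow> ent (ptrans k g) a a = g $$ (a,a)"
  unfolding ptrans_def ent_def by simp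

lemma posf_ptrans:
  assumes "is_state k g" "g \<noteq> 0\<^sub>m (k*k) (k*k)"
  shows "posf (k*k) (ent (ptrans k g))"
proof -
  obtain a where a: "a < k*k" "Im (g $$ (a,a)) = 0" "0 < Re (g $$ (a,a))"
    using psd_diag_pos[of g "k*k"] assms unfolding is_state_def by blast
  show ?thesis unfolding posf_def
    by (rule exI[of _ "\<lambda>p. if p = a then 1 else 0"]) (simp add: form_one a ptrans_diag)
qed

lemma R_entry: "i < k \<Longrightarrow> l < k \<Longrightarrow> ent (realign k g) (i*k+i) (l*k+l) = g $$ (i*k+l, i*k+l)"
  unfolding realign_def ent_def using idx_lt[of i k i k] idx_lt[of l k l k] by simp

lemma RP_entry: "i < k \<Longrightarrow> l < k \<Longrightarrow> ent (realign k (ptrans k g)) (i*k+i) (l*k+l) = g $$ (i*k+l, i*k+l)"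
  using R_entry[of i k l "ptrans k g"] ptrans_diag[of "i*k+l" k g] idx_lt[of i k l k] unfolding ent_def by simp

lemma state_trace:
  assumes "is_state k g" "g \<noteq> 0\<^sub>m (k*k) (k*k)"
  shows "Im (\<Sum>i<k. \<Sum>l<k. g $$ (i*k+l, i*k+l)) = 0 \<and> 0 < Re (\<Sum>i<k. \<Sum>l<k. g $$ (i*k+l, i*k+l))"
proof -
  have gc: "g \<in> carrier_mat (k*k) (k*k)" and gp: "psd g" using assms unfolding is_state_def by auto
  obtain a where a: "a < k*k" "Im (g $$ (a,a)) = 0" "0 < Re (g $$ (a,a))"
    using psd_diag_pos[OF gc gp assms(2)] by blast
  have p: "psdf (k*k) (ent g)" using psd_iff[OF gc] gp by blast
  have "Im (\<Sum>p<k*k. ent g p p) = 0 \<and> 0 < Re (\<Sum>p<k*k. ent g p p)"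
    by (rule trace_pos[OF p a(1)]) (use a in \<open>simp add: ent_def\<close>)
  then show ?thesis unfolding sum_split_mult ent_def .
qed

definition phi :: "nat \<Rightarrow> nat \<Rightarrow> complex" where "phi k = (\<lambda>p. if p div k = p mod k then 1 else 0)"

lemma posf_RP:
  assumes "is_state k g" "g \<noteq> 0\<^sub>m (k*k) (k*k)"
  shows "posf (k*k) (ent (realign k (ptrans k g)))"
proof -
  have "form (k*k) (ent (realign k (ptrans k g))) (phi k) = (\<Sum>i<k. \<Sum>l<k. g $$ (i*k+l, i*k+l))"
    unfolding phi_def form_phi by (intro sum.cong refl) (simp add: RP_entry)
  then show ?thesis unfolding posf_def using state_trace[OF assms] by (intro exI[of _ "phi k"]) simp
qed

lemma smult1: "1 \<cdot>\<^sub>m (A::complex mat) = A" by (rule eq_matI) auto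

lemma realign_invol:
  assumes "g \<in> carrier_mat (k*k) (k*k)"
  shows "realign k (realign k g) = g"
proof (rule eq_matI)
  show "dim_row (realign k (realign k g)) = dim_row g" "dim_col (realign k (realign k g)) = dim_col g"
    using assms unfolding realign_def by auto
  fix p q assume "p < dim_row g" "q < dim_col g"
  then have pq: "p < k*k" "q < k*k" using assms by auto
  have b: "p div k < k" "p mod k < k" "q div k < k" "q mod k < k" using divmod_lt pq by auto
  have P: "p div k * k + q div k < k*k" "p mod k * k + q mod k < k*k"
    using idx_lt b by auto
  have k: "k > 0" using pq by (cases k) auto
  have "realign k (realign k g) $$ (p,q) = realign k g $$ (p div k * k + q div k, p mod k * k + q mod k)"
    unfolding realign_def[of k "realign k g"] using pq by simp
  also have "\<dots> = g $$ (p div k * k + p mod k, q div k * k + q mod k)"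
    unfolding realign_def using P b k by simp
  also have "\<dots> = g $$ (p,q)" by simp
  finally show "realign k (realign k g) $$ (p,q) = g $$ (p,q)" .
qed

lemma realign_smult': 
  assumes "g \<in> carrier_mat (k*k) (k*k)"
  shows "realign k (c \<cdot>\<^sub>m g) = c \<cdot>\<^sub>m realign k g"
proof (rule eq_matI)
  fix p q assume "p < dim_row (c \<cdot>\<^sub>m realign k g)" "q < dim_col (c \<cdot>\<^sub>m realign k g)"
  then have pq: "p < k*k" "q < k*k" unfolding realign_def by auto
  have b: "p div k < k" "p mod k < k" "q div k < k" "q mod k < k" using divmod_lt pq by auto
  have P: "p div k * k + q div k < k*k" "p mod k * k + q mod k < k*k"
    using idx_lt b by auto
  show "realign k (c \<cdot>\<^sub>m g) $$ (p,q) = (c \<cdot>\<^sub>m realign k g) $$ (p,q)"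
    unfolding realign_def using pq P assms by simp
qed (auto simp: realign_def)

lemma kron_smult:
  assumes "A \<in> carrier_mat n n" "B \<in> carrier_mat m m"
  shows "kron (c \<cdot>\<^sub>m A) B = c \<cdot>\<^sub>m kron A B"
proof (rule eq_matI)
  fix p q assume "p < dim_row (c \<cdot>\<^sub>m kron A B)" "q < dim_col (c \<cdot>\<^sub>m kron A B)"
  then have pq: "p < n*m" "q < n*m" using assms unfolding kron_def by auto
  have b: "p div m < n" "q div m < n" using divmod_lt pq by auto
  show "kron (c \<cdot>\<^sub>m A) B $$ (p,q) = (c \<cdot>\<^sub>m kron A B) $$ (p,q)"
    unfolding kron_def using pq b assms by simp
qed (use assms in \<open>auto simp: kron_def\<close>)

lemma kron_factor:
  assumes A: "A \<in> carrier_mat n n" and B: "B \<in> carrier_mat n n"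
    and X: "X \<in> carrier_mat m m" and Y: "Y \<in> carrier_mat m m"
    and eq: "kron A X = kron B Y" and nA: "A \<noteq> 0\<^sub>m n n" and nX: "X \<noteq> 0\<^sub>m m m"
  shows "\<exists>c. B = c \<cdot>\<^sub>m A \<and> X = c \<cdot>\<^sub>m Y"
proof -
  obtain i0 j0 where ij: "i0 < n" "j0 < n" "A $$ (i0,j0) \<noteq> 0" using nz_entry[OF A nA] by blast
  obtain r0 s0 where rs: "r0 < m" "s0 < m" "X $$ (r0,s0) \<noteq> 0" using nz_entry[OF X nX] by blast
  have e: "A $$ (i,j) * X $$ (r,s) = B $$ (i,j) * Y $$ (r,s)" if "i < n" "j < n" "r < m" "s < m" for i j r s
    using kron_ent2[OF A X that] kron_ent2[OF B Y that] eq by simp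
  define c where "c = B $$ (i0,j0) / A $$ (i0,j0)"
  have Xc: "X $$ (r,s) = c * Y $$ (r,s)" if "r < m" "s < m" for r s
    using e[OF ij(1,2) that] ij(3) unfolding c_def by (simp add: field_simps)
  have c0: "c \<noteq> 0" using Xc[OF rs(1,2)] rs(3) by auto
  have Y0: "Y $$ (r0,s0) \<noteq> 0" using Xc[OF rs(1,2)] rs(3) by auto
  have Bc: "B $$ (i,j) = c * A $$ (i,j)" if "i < n" "j < n" for i j
  proof -
    have "A $$ (i,j) * (c * Y $$ (r0,s0)) = B $$ (i,j) * Y $$ (r0,s0)"
      using e[OF that rs(1,2)] Xc[OF rs(1,2)] by simp
    then show ?thesis using Y0 by (simp add: field_simps)
  qed
  have "B = c \<cdot>\<^sub>m A" by (rule eq_matI) (use A B Bc in auto)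
  moreover have "X = c \<cdot>\<^sub>m Y" by (rule eq_matI) (use X Y Xc in auto)
  ultimately show ?thesis by blast
qed

lemma kron_nz:
  assumes A: "A \<in> carrier_mat n n" and X: "X \<in> carrier_mat m m"
    and nA: "A \<noteq> 0\<^sub>m n n" and nX: "X \<noteq> 0\<^sub>m m m"
  shows "kron A X \<noteq> 0\<^sub>m (n*m) (n*m)"
proof
  assume z: "kron A X = 0\<^sub>m (n*m) (n*m)"
  obtain i0 j0 where ij: "i0 < n" "j0 < n" "A $$ (i0,j0) \<noteq> 0" using nz_entry[OF A nA] by blast
  obtain r0 s0 where rs: "r0 < m" "s0 < m" "X $$ (r0,s0) \<noteq> 0" using nz_entry[OF X nX] by blast
  have "kron A X $$ (i0*m+r0, j0*m+s0) = A $$ (i0,j0) * X $$ (r0,s0)"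
    using kron_ent2[OF A X ij(1,2) rs(1,2)] .
  moreover have "kron A X $$ (i0*m+r0, j0*m+s0) = 0"
    unfolding z using idx_lt[OF ij(1) rs(1)] idx_lt[OF ij(2) rs(2)] by simp
  ultimately show False using ij rs by simp
qed

lemma kron_list_nz:
  "(\<forall>M\<in>set Ms. M \<in> carrier_mat d d \<and> M \<noteq> 0\<^sub>m d d) \<Longrightarrow> kron_list Ms \<noteq> 0\<^sub>m (d ^ length Ms) (d ^ length Ms)"
proof (induction Ms)
  case Nil
  have "(1\<^sub>m 1 :: complex mat) \<noteq> 0\<^sub>m 1 1"
  proof
    assume "(1\<^sub>m 1 :: complex mat) = 0\<^sub>m 1 1"
    then have "(1\<^sub>m 1 :: complex mat) $$ (0,0) = (0\<^sub>m 1 1 :: complex mat) $$ (0,0)" by simp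
    then show False by simp
  qed
  then show ?case unfolding kron_list_def by simp
next
  case (Cons M Ms)
  have K: "kron_list Ms \<in> carrier_mat (d ^ length Ms) (d ^ length Ms)"
    using kron_list_carrier[of Ms d] Cons.prems by auto
  show ?case unfolding kron_list_Cons using kron_nz[of M d "kron_list Ms" "d ^ length Ms"] Cons K by simp
qed

lemma realign_nz:
  assumes "g \<in> carrier_mat (k*k) (k*k)" "g \<noteq> 0\<^sub>m (k*k) (k*k)"
  shows "realign k g \<noteq> 0\<^sub>m (k*k) (k*k)"
proof
  assume z: "realign k g = 0\<^sub>m (k*k) (k*k)"
  have "realign k (0\<^sub>m (k*k) (k*k)) = 0\<^sub>m (k*k) (k*k)"
  proof (rule eq_matI)
    fix p q assume "p < dim_row (0\<^sub>m (k*k) (k*k) :: complex mat)" "q < dim_col (0\<^sub>m (k*k) (k*k) :: complex mat)"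
    then have pq: "p < k*k" "q < k*k" by auto
    have b: "p div k < k" "p mod k < k" "q div k < k" "q mod k < k" using divmod_lt pq by auto
    have P: "p div k * k + q div k < k*k" "p mod k * k + q mod k < k*k"
      using idx_lt b by auto
    show "realign k (0\<^sub>m (k*k) (k*k)) $$ (p,q) = 0\<^sub>m (k*k) (k*k) $$ (p,q)"
      unfolding realign_def using pq P by simp
  qed (auto simp: realign_def)
  then have "g = 0\<^sub>m (k*k) (k*k)" using realign_invol[OF assms(1)] z by simp
  then show False using assms by blast
qed

lemma state_c1:
  assumes st: "is_state k g" and nz: "g \<noteq> 0\<^sub>m (k*k) (k*k)" and R: "realign k g = c \<cdot>\<^sub>m g"
  shows "c = 1"
proof -
  have gc: "g \<in> carrier_mat (k*k) (k*k)" and gp: "psd g" using st unfolding is_state_def by auto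
  have "g = realign k (realign k g)" using realign_invol[OF gc] by simp
  also have "\<dots> = c \<cdot>\<^sub>m (c \<cdot>\<^sub>m g)" unfolding R realign_smult'[OF gc] R ..
  finally have gg: "g = c \<cdot>\<^sub>m (c \<cdot>\<^sub>m g)" .
  obtain i0 j0 where ij: "i0 < k*k" "j0 < k*k" "g $$ (i0,j0) \<noteq> 0" using nz_entry[OF gc nz] by blast
  have "g $$ (i0,j0) = c * (c * g $$ (i0,j0))" using arg_cong[OF gg, of "\<lambda>M. M $$ (i0,j0)"] ij gc by simp
  then have cc: "c * c = 1" using ij(3) by (simp add: field_simps)
  have p: "psdf (k*k) (ent g)" using psd_iff[OF gc] gp by blast
  define F where "F = form (k*k) (ent g) (phi k)"
  have F: "Im F = 0" "0 \<le> Re F" using psdf_form[OF p] unfolding F_def by auto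
  define T where "T = (\<Sum>i<k. \<Sum>l<k. g $$ (i*k+l, i*k+l))"
  have T: "Im T = 0" "0 < Re T" using state_trace[OF st nz] unfolding T_def by auto
  have "T = (\<Sum>i<k. \<Sum>l<k. ent (realign k g) (i*k+i) (l*k+l))"
    unfolding T_def by (intro sum.cong refl) (simp add: R_entry)
  also have "\<dots> = (\<Sum>i<k. \<Sum>l<k. c * ent g (i*k+i) (l*k+l))"
  proof (intro sum.cong refl)
    fix i l assume "i \<in> {..<k}" "l \<in> {..<k}"
    then have "i*k+i < k*k" "l*k+l < k*k" using idx_lt by auto
    then show "ent (realign k g) (i*k+i) (l*k+l) = c * ent g (i*k+i) (l*k+l)"
      unfolding R ent_def using gc by simp
  qed
  also have "\<dots> = c * F" unfolding F_def phi_def form_phi by (simp add: sum_distrib_left)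
  finally have TF: "T = c * F" .
  have "(c - 1) * (c + 1) = 0" using cc by (simp add: algebra_simps)
  then have "c = 1 \<or> c = -1" by (simp add: eq_neg_iff_add_eq_0)
  moreover have "c \<noteq> -1"
  proof
    assume "c = -1"
    then have "Re T = - Re F" using TF by simp
    then show False using T F by simp
  qed
  ultimately show ?thesis by blast
qed

lemma claim_c:
  "(\<forall>g\<in>set gs. is_state k g \<and> g \<noteq> 0\<^sub>m (k*k) (k*k)) \<Longrightarrow>
   kron_list (map (realign k) gs) = c \<cdot>\<^sub>m kron_list gs \<Longrightarrow> c = 1 \<and> (\<forall>g\<in>set gs. realign k g = g)"
proof (induction gs arbitrary: c)
  case Nil
  then have "(1\<^sub>m 1 :: complex mat) $$ (0,0) = (c \<cdot>\<^sub>m 1\<^sub>m 1) $$ (0,0)" unfolding kron_list_def by simp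
  then show ?case by simp
next
  case (Cons g gs)
  let ?d = "k*k"
  let ?D = "?d ^ length gs"
  have st: "is_state k g" and gnz: "g \<noteq> 0\<^sub>m ?d ?d" using Cons.prems by auto
  have gc: "g \<in> carrier_mat ?d ?d" using st unfolding is_state_def by auto
  have all: "\<forall>h\<in>set gs. is_state k h \<and> h \<noteq> 0\<^sub>m ?d ?d" using Cons.prems by auto
  have K2: "kron_list gs \<in> carrier_mat ?D ?D"
    using kron_list_carrier[of gs ?d] all unfolding is_state_def by auto
  have K1: "kron_list (map (realign k) gs) \<in> carrier_mat ?D ?D"
    using kron_list_carrier[of "map (realign k) gs" ?d] realign_carrier by auto
  have K1nz: "kron_list (map (realign k) gs) \<noteq> 0\<^sub>m ?D ?D"
    using kron_list_nz[of "map (realign k) gs" ?d] realign_carrier realign_nz all unfolding is_state_def by auto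
  have "kron (realign k g) (kron_list (map (realign k) gs)) = kron (c \<cdot>\<^sub>m g) (kron_list gs)"
    using Cons.prems(2) kron_smult[OF gc K2] by (simp add: kron_list_Cons)
  from kron_factor[OF realign_carrier smult_carrier_mat[OF gc] K1 K2 this realign_nz[OF gc gnz] K1nz]
  obtain lam where l1: "c \<cdot>\<^sub>m g = lam \<cdot>\<^sub>m realign k g" and l2: "kron_list (map (realign k) gs) = lam \<cdot>\<^sub>m kron_list gs"
    by blast
  from Cons.IH[OF all l2] have lam: "lam = 1" and rest: "\<forall>h\<in>set gs. realign k h = h" by auto
  have "realign k g = c \<cdot>\<^sub>m g"
  proof (rule eq_matI)
    fix i j assume "i < dim_row (c \<cdot>\<^sub>m g)" "j < dim_col (c \<cdot>\<^sub>m g)"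
    then have "i < ?d" "j < ?d" using gc by auto
    then show "realign k g $$ (i,j) = (c \<cdot>\<^sub>m g) $$ (i,j)"
      using arg_cong[OF l1, of "\<lambda>M. M $$ (i,j)"] lam realign_carrier[of k g] by simp
  qed (use gc realign_carrier[of k g] in auto)
  moreover have c1: "c = 1" using state_c1[OF st gnz] calculation .
  ultimately have "realign k g = g" by (simp add: smult1)
  then show ?case using c1 rest by simp
qed

theorem mainTheorem15:
  fixes k :: nat and gs :: "complex mat list"
  assumes "gs \<noteq> []"
    and "\<forall>g\<in>set gs. is_state k g"
    and "\<forall>g\<in>set gs. \<not> (mat_image g \<subseteq> antisym_subspace k)"
  shows "(psd (kron_list (map (ptrans k) gs)) \<longleftrightarrow> (\<forall>g\<in>set gs. psd (ptrans k g)))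
       \<and> (psd (kron_list (map (\<lambda>g. realign k (ptrans k g)) gs))
            \<longleftrightarrow> (\<forall>g\<in>set gs. psd (realign k (ptrans k g))))
       \<and> (kron_list (map (realign k) gs) = kron_list gs
            \<longleftrightarrow> (\<forall>g\<in>set gs. realign k g = g))"
proof -
  have all: "\<forall>g\<in>set gs. is_state k g \<and> g \<noteq> 0\<^sub>m (k*k) (k*k)"
  proof
    fix g assume g: "g \<in> set gs"
    then have "is_state k g" "\<not> (mat_image g \<subseteq> antisym_subspace k)" using assms(2,3) by blast+
    then show "is_state k g \<and> g \<noteq> 0\<^sub>m (k*k) (k*k)" using state_nz by blast
  qed
  have a: "\<forall>M\<in>set (map (ptrans k) gs). M \<in> carrier_mat (k*k) (k*k) \<and> posf (k*k) (ent M)"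
  proof
    fix M assume "M \<in> set (map (ptrans k) gs)"
    then obtain g where g: "g \<in> set gs" "M = ptrans k g" by auto
    have "posf (k*k) (ent (ptrans k g))" using all g(1) posf_ptrans by blast
    then show "M \<in> carrier_mat (k*k) (k*k) \<and> posf (k*k) (ent M)" using g(2) ptrans_carrier by blast
  qed
  have b: "\<forall>M\<in>set (map (\<lambda>g. realign k (ptrans k g)) gs). M \<in> carrier_mat (k*k) (k*k) \<and> posf (k*k) (ent M)"
  proof
    fix M assume "M \<in> set (map (\<lambda>g. realign k (ptrans k g)) gs)"
    then obtain g where g: "g \<in> set gs" "M = realign k (ptrans k g)" by auto
    have "posf (k*k) (ent (realign k (ptrans k g)))" using all g(1) posf_RP by blast
    then show "M \<in> carrier_mat (k*k) (k*k) \<and> posf (k*k) (ent M)" using g(2) realign_carrier by blast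
  qed
  have setmap: "(\<forall>M\<in>set (map f gs). P M) \<longleftrightarrow> (\<forall>g\<in>set gs. P (f g))" for f :: "complex mat \<Rightarrow> complex mat" and P
    by simp
  have A: "psd (kron_list (map (ptrans k) gs)) \<longleftrightarrow> (\<forall>g\<in>set gs. psd (ptrans k g))"
    using list_psd[OF a] setmap[of "ptrans k" psd] by blast
  have B: "psd (kron_list (map (\<lambda>g. realign k (ptrans k g)) gs))
            \<longleftrightarrow> (\<forall>g\<in>set gs. psd (realign k (ptrans k g)))"
    using list_psd[OF b] setmap[of "\<lambda>g. realign k (ptrans k g)" psd] by blast
  have C: "kron_list (map (realign k) gs) = kron_list gs \<longleftrightarrow> (\<forall>g\<in>set gs. realign k g = g)"
  proof
    assume "kron_list (map (realign k) gs) = kron_list gs"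
    then have "kron_list (map (realign k) gs) = 1 \<cdot>\<^sub>m kron_list gs" by (simp only: smult1)
    then show "\<forall>g\<in>set gs. realign k g = g" using claim_c[OF all] by blast
  next
    assume "\<forall>g\<in>set gs. realign k g = g"
    then have "map (realign k) gs = gs" by (simp add: map_idI)
    then show "kron_list (map (realign k) gs) = kron_list gs" by simp
  qed
  show ?thesis using A B C by blast
qed

end
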